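(* The functions $(x,t)\mapsto F(x,t)$ and $(x,t)\mapsto G(x,t)$ are locally Lipschitz continuous on $[0,\infty)\times[0,\infty)$.
   Context: Standing assumptions: $u_0,u_b:[0,\infty)\to\mathbb{R}$ bounded measurable with $u_b>0$; $\rho_0,\rho_b:[0,\infty)\to(0,\infty)$ positive locally bounded measurable. For $x,t,y,\tau\ge0$: $F(y,x,t)=\int_0^y[tu_0(\eta)+\eta-x]\rho_0(\eta)\,d\eta$, $G(\tau,x,t)=\int_0^\tau[x-u_b(\eta)(t-\eta)]\rho_b(\eta)u_b(\eta)\,d\eta$, and $F(x,t)=\min_{y\ge0}F(y,x,t)$, $G(x,t)=\min_{\tau\ge0}G(\tau,x,t)$ (the minima are attained). *)

theory Defs
  imports "HOL-Analysis.Analysis"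
begin

definition Fyxt :: "(real \<Rightarrow> real) \<Rightarrow> (real \<Rightarrow> real) \<Rightarrow> real \<Rightarrow> real \<Rightarrow> real \<Rightarrow> real" where
  "Fyxt u0 \<rho>0 y x t = set_lebesgue_integral lborel {0..y} (\<lambda>\<eta>. (t * u0 \<eta> + \<eta> - x) * \<rho>0 \<eta>)"

definition Gtxt :: "(real \<Rightarrow> real) \<Rightarrow> (real \<Rightarrow> real) \<Rightarrow> real \<Rightarrow> real \<Rightarrow> real \<Rightarrow> real" where
  "Gtxt ub \<rho>b \<tau> x t = set_lebesgue_integral lborel {0..\<tau>} (\<lambda>\<eta>. (x - ub \<eta> * (t - \<eta>)) * \<rho>b \<eta> * ub \<eta>)"

text \<open>F(x,t) = min over y >= 0 (the minimum is attained, so it equals the infimum).\<close>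
definition Fmin :: "(real \<Rightarrow> real) \<Rightarrow> (real \<Rightarrow> real) \<Rightarrow> real \<Rightarrow> real \<Rightarrow> real" where
  "Fmin u0 \<rho>0 x t = Inf ((\<lambda>y. Fyxt u0 \<rho>0 y x t) ` {0..})"

definition Gmin :: "(real \<Rightarrow> real) \<Rightarrow> (real \<Rightarrow> real) \<Rightarrow> real \<Rightarrow> real \<Rightarrow> real" where
  "Gmin ub \<rho>b x t = Inf ((\<lambda>\<tau>. Gtxt ub \<rho>b \<tau> x t) ` {0..})"

definition locally_lipschitz_on :: "('a::metric_space) set \<Rightarrow> ('a \<Rightarrow> 'b::metric_space) \<Rightarrow> bool" where
  "locally_lipschitz_on S f \<longleftrightarrow> (\<forall>p\<in>S. \<exists>r>0. \<exists>L. L-lipschitz_on (ball p r \<inter> S) f)"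

end

theory Submission
  imports Defs
begin


definition Hg :: "(real \<Rightarrow> real) \<Rightarrow> (real \<Rightarrow> real) \<Rightarrow> (real \<Rightarrow> real) \<Rightarrow> real \<Rightarrow> real \<Rightarrow> real \<Rightarrow> real" where
  "Hg A B C y x t = set_lebesgue_integral lborel {0..y} (\<lambda>\<eta>. t * A \<eta> + x * B \<eta> + C \<eta>)"

lemma const_set_integrable:
  "set_integrable lborel {a..b::real} (\<lambda>_. c::real)"
proof -
  have "integrable lborel (\<lambda>x. c * indicator {a..b} x)"
    by (intro integrable_mult_right integrable_real_indicator) (auto simp: emeasure_lborel_Icc_eq)
  then show ?thesis unfolding set_integrable_def by (simp add: mult.commute)
qed

lemma lin_meas:
  fixes A B C :: "real \<Rightarrow> real"
  assumes "set_borel_measurable lborel {0..} A" "set_borel_measurable lborel {0..} B"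
    "set_borel_measurable lborel {0..} C"
  shows "set_borel_measurable lborel {0..} (\<lambda>\<eta>. t * A \<eta> + x * B \<eta> + C \<eta>)"
proof -
  have "(\<lambda>\<eta>. indicator {0::real..} \<eta> *\<^sub>R (t * A \<eta> + x * B \<eta> + C \<eta>)) =
    (\<lambda>\<eta>. t * (indicator {0..} \<eta> *\<^sub>R A \<eta>) + x * (indicator {0..} \<eta> *\<^sub>R B \<eta>) + indicator {0..} \<eta> *\<^sub>R C \<eta>)"
    by (auto simp: fun_eq_iff indicator_def)
  then show ?thesis using assms unfolding set_borel_measurable_def by simp
qed

lemma int_of_bdd:
  fixes g :: "real \<Rightarrow> real"
  assumes "set_borel_measurable lborel {0..} g" "\<forall>\<eta>\<in>{0..y}. \<bar>g \<eta>\<bar> \<le> M"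
  shows "set_integrable lborel {0..y} g"
proof (rule set_integrable_bound[OF const_set_integrable[of 0 y M]])
  show "set_borel_measurable lborel {0..y} g"
    by (rule set_borel_measurable_subset[OF assms(1)]) auto
  show "AE x\<in>{0..y} in lborel. norm (g x) \<le> norm M"
    using assms(2) by (auto intro!: AE_I2 order_trans[OF _ abs_ge_self])
qed

lemma abs_int_bound:
  fixes g :: "real \<Rightarrow> real"
  assumes "set_integrable lborel {0..y} g" "0 \<le> y" "y \<le> Y" "\<forall>\<eta>\<in>{0..y}. \<bar>g \<eta>\<bar> \<le> M"
  shows "\<bar>set_lebesgue_integral lborel {0..y} g\<bar> \<le> Y * M"
proof -
  have M0: "0 \<le> M" using assms(2,4) by force
  have "set_lebesgue_integral lborel {0..y} g \<le> set_lebesgue_integral lborel {0..y} (\<lambda>_. M)"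
    using assms(4) by (intro set_integral_mono assms(1) const_set_integrable) (auto simp: abs_le_iff)
  moreover have "set_lebesgue_integral lborel {0..y} (\<lambda>_. -M) \<le> set_lebesgue_integral lborel {0..y} g"
    using assms(4) by (intro set_integral_mono assms(1) const_set_integrable) (force simp: abs_le_iff)
  moreover have "set_lebesgue_integral lborel {0..y} (\<lambda>_. c) = y * c" for c
    using assms(2) by (subst set_integral_const) auto
  moreover have "y * M \<le> Y * M" using assms M0 by (simp add: mult_right_mono)
  ultimately show ?thesis by (auto simp: abs_le_iff)
qed

lemma mono_tail:
  fixes g :: "real \<Rightarrow> real"
  assumes "set_integrable lborel {0..y} g" "0 \<le> Y" "Y \<le> y" "\<forall>\<eta>\<ge>Y. g \<eta> \<ge> 0"
  shows "set_lebesgue_integral lborel {0..Y} g \<le> set_lebesgue_integral lborel {0..y} g"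
proof -
  have U: "{0..y} = {0..Y} \<union> {Y<..y}" using assms by auto
  have i1: "set_integrable lborel {0..Y} g"
    by (rule set_integrable_subset[OF assms(1)]) (use assms in auto)
  have i2: "set_integrable lborel {Y<..y} g"
    by (rule set_integrable_subset[OF assms(1)]) (use assms in auto)
  have "set_lebesgue_integral lborel {Y<..y} (\<lambda>_. 0::real) \<le> set_lebesgue_integral lborel {Y<..y} g"
    using assms(4) by (intro set_integral_mono i2) (auto simp: set_integrable_def)
  then have "0 \<le> set_lebesgue_integral lborel {Y<..y} g"
    by (simp add: set_lebesgue_integral_def)
  moreover have "set_lebesgue_integral lborel {0..y} g =
      set_lebesgue_integral lborel {0..Y} g + set_lebesgue_integral lborel {Y<..y} g"
    unfolding U by (rule set_integral_Un[OF _ i1 i2]) auto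
  ultimately show ?thesis by simp
qed

lemma inf_lip:
  fixes f g :: "real \<Rightarrow> real"
  assumes "\<forall>y\<ge>Y. f y \<ge> f Y" "\<forall>y\<ge>Y. g y \<ge> g Y" "Y \<ge> 0"
    "\<forall>y\<in>{0..Y}. \<bar>f y - g y\<bar> \<le> D"
    "\<forall>y\<in>{0..Y}. \<bar>f y\<bar> \<le> E" "\<forall>y\<in>{0..Y}. \<bar>g y\<bar> \<le> E"
  shows "\<bar>Inf (f ` {0..}) - Inf (g ` {0..})\<bar> \<le> D"
proof -
  have key: "Inf (f ` {0..}) - D \<le> Inf (g ` {0..})"
    if a1: "\<forall>y\<ge>Y. f y \<ge> f Y" and a2: "\<forall>y\<ge>Y. g y \<ge> g Y"
    and a4: "\<forall>y\<in>{0..Y}. \<bar>f y - g y\<bar> \<le> D"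
    and a5: "\<forall>y\<in>{0..Y}. \<bar>f y\<bar> \<le> E" for f g :: "real \<Rightarrow> real"
  proof -
    have fm: "f y \<ge> f (min y Y)" if "y \<ge> 0" for y
      using a1 by (cases "y \<le> Y") (auto simp: min_def)
    have bdd: "bdd_below (f ` {0..})"
    proof (rule bdd_belowI2)
      fix y :: real assume "y \<in> {0..}"
      then have "f y \<ge> f (min y Y)" "min y Y \<in> {0..Y}" using fm assms(3) by auto
      moreover have "\<bar>f (min y Y)\<bar> \<le> E" using a5 \<open>min y Y \<in> {0..Y}\<close> by blast
      ultimately show "- E \<le> f y" by linarith
    qed
    show ?thesis
    proof (rule cInf_greatest)
      show "g ` {0..} \<noteq> {}" by auto
      fix z assume "z \<in> g ` {0..}"
      then obtain y where y: "y \<ge> 0" "z = g y" by auto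
      let ?m = "min y Y"
      have m: "?m \<in> {0..Y}" using y assms(3) by auto
      have "Inf (f ` {0..}) \<le> f ?m"
        using m by (intro cInf_lower bdd) auto
      also have "\<dots> \<le> g ?m + D"
      proof -
        have "\<bar>f ?m - g ?m\<bar> \<le> D" using a4 m by blast
        then show ?thesis by linarith
      qed
      also have "g ?m \<le> g y" using a2 y by (cases "y \<le> Y") (auto simp: min_def)
      finally show "Inf (f ` {0..}) - D \<le> z" using y by simp
    qed
  qed
  have "Inf (f ` {0..}) - D \<le> Inf (g ` {0..})"
    using key[of f g] assms by blast
  moreover have "Inf (g ` {0..}) - D \<le> Inf (f ` {0..})"
    using key[of g f] assms by (force simp: abs_minus_commute)
  ultimately show ?thesis by (simp add: abs_le_iff)
qed

lemma lin_bound: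
  fixes A B C :: "real \<Rightarrow> real"
  assumes "\<bar>A \<eta>\<bar> \<le> MA" "\<bar>B \<eta>\<bar> \<le> MB" "\<bar>C \<eta>\<bar> \<le> MC"
  shows "\<bar>t * A \<eta> + x * B \<eta> + C \<eta>\<bar> \<le> \<bar>t\<bar> * MA + \<bar>x\<bar> * MB + MC"
proof -
  have "\<bar>t * A \<eta>\<bar> \<le> \<bar>t\<bar> * MA" using assms(1) by (simp add: abs_mult mult_left_mono)
  moreover have "\<bar>x * B \<eta>\<bar> \<le> \<bar>x\<bar> * MB" using assms(2) by (simp add: abs_mult mult_left_mono)
  ultimately show ?thesis using assms(3) abs_triangle_ineq[of "t * A \<eta> + x * B \<eta>" "C \<eta>"]
    abs_triangle_ineq[of "t * A \<eta>" "x * B \<eta>"] by linarith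
qed

lemma gen_main:
  fixes A B C :: "real \<Rightarrow> real" and K :: real
  assumes mA: "set_borel_measurable lborel {0..} A"
    and mB: "set_borel_measurable lborel {0..} B"
    and mC: "set_borel_measurable lborel {0..} C"
    and bA: "\<forall>T. \<exists>M. \<forall>\<eta>\<in>{0..T}. \<bar>A \<eta>\<bar> \<le> M"
    and bB: "\<forall>T. \<exists>M. \<forall>\<eta>\<in>{0..T}. \<bar>B \<eta>\<bar> \<le> M"
    and bC: "\<forall>T. \<exists>M. \<forall>\<eta>\<in>{0..T}. \<bar>C \<eta>\<bar> \<le> M"
    and K: "K \<ge> 0"
    and pos: "\<forall>x\<ge>0. \<forall>t\<ge>0. \<forall>\<eta>. \<eta> \<ge> x + K * t \<longrightarrow> t * A \<eta> + x * B \<eta> + C \<eta> \<ge> 0"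
  shows "locally_lipschitz_on ({0..} \<times> {0..}) (\<lambda>(x, t). Inf ((\<lambda>y. Hg A B C y x t) ` {0..}))"
proof -
  define g where "g x t = (\<lambda>\<eta>. t * A \<eta> + x * B \<eta> + C \<eta>)" for x t :: real
  have Hg_eq: "Hg A B C y x t = set_lebesgue_integral lborel {0..y} (g x t)" for y x t
    by (simp add: Hg_def g_def)
  have gint: "set_integrable lborel {0..y} (g x t)" for y x t
  proof -
    obtain MA where MA: "\<forall>\<eta>\<in>{0..y}. \<bar>A \<eta>\<bar> \<le> MA" using bA by blast
    obtain MB where MB: "\<forall>\<eta>\<in>{0..y}. \<bar>B \<eta>\<bar> \<le> MB" using bB by blast
    obtain MC where MC: "\<forall>\<eta>\<in>{0..y}. \<bar>C \<eta>\<bar> \<le> MC" using bC by blast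
    show ?thesis unfolding g_def
    proof (rule int_of_bdd[OF lin_meas[OF mA mB mC]])
      show "\<forall>\<eta>\<in>{0..y}. \<bar>t * A \<eta> + x * B \<eta> + C \<eta>\<bar> \<le> \<bar>t\<bar> * MA + \<bar>x\<bar> * MB + MC"
        using MA MB MC lin_bound by blast
    qed
  qed
  show ?thesis
    unfolding locally_lipschitz_on_def
  proof (intro ballI)
    fix p :: "real \<times> real" assume "p \<in> {0..} \<times> {0..}"
    then obtain a b where p: "p = (a, b)" "a \<ge> 0" "b \<ge> 0" by (cases p) auto
    define Y where "Y = a + 1 + K * (b + 1)"
    have Y0: "Y \<ge> 0" using p K by (simp add: Y_def)
    obtain MA where MA: "\<forall>\<eta>\<in>{0..Y}. \<bar>A \<eta>\<bar> \<le> MA" using bA by blast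
    obtain MB where MB: "\<forall>\<eta>\<in>{0..Y}. \<bar>B \<eta>\<bar> \<le> MB" using bB by blast
    obtain MC where MC: "\<forall>\<eta>\<in>{0..Y}. \<bar>C \<eta>\<bar> \<le> MC" using bC by blast
    have MA0: "MA \<ge> 0" using MA Y0 by force
    have MB0: "MB \<ge> 0" using MB Y0 by force
    define L where "L = 2 * Y * (MA + MB)"
    have L0: "L \<ge> 0" using Y0 MA0 MB0 by (simp add: L_def)
    define S where "S = ball p 1 \<inter> {0..} \<times> {0..}"
    have inS: "x \<ge> 0 \<and> t \<ge> 0 \<and> x \<le> a + 1 \<and> t \<le> b + 1 \<and> x + K * t \<le> Y" if "(x, t) \<in> S" for x t
    proof -
      have d: "dist p (x, t) < 1" using that by (simp add: S_def)
      have "dist a x < 1" using d dist_fst_le[of p "(x,t)"] p by simp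
      moreover have "dist b t < 1" using d dist_snd_le[of p "(x,t)"] p by simp
      ultimately have xa: "x \<le> a + 1" and tb: "t \<le> b + 1" by (auto simp: dist_real_def)
      have "K * t \<le> K * (b + 1)" using K tb by (simp add: mult_left_mono)
      then show ?thesis using that xa tb by (auto simp: S_def Y_def)
    qed
    define E where "E = (b + 1) * MA + (a + 1) * MB + MC"
    have Ebound: "\<forall>y\<in>{0..Y}. \<bar>Hg A B C y x t\<bar> \<le> Y * E" if "(x, t) \<in> S" for x t
    proof
      fix y assume y: "y \<in> {0..Y}"
      have xt: "x \<ge> 0" "t \<ge> 0" "x \<le> a + 1" "t \<le> b + 1" using inS[OF that] by auto
      show "\<bar>Hg A B C y x t\<bar> \<le> Y * E" unfolding Hg_eq
      proof (rule abs_int_bound[OF gint])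
        show "0 \<le> y" "y \<le> Y" using y by auto
        show "\<forall>\<eta>\<in>{0..y}. \<bar>g x t \<eta>\<bar> \<le> E"
        proof
          fix \<eta> assume "\<eta> \<in> {0..y}"
          then have e: "\<eta> \<in> {0..Y}" using y by auto
          have "\<bar>g x t \<eta>\<bar> \<le> \<bar>t\<bar> * MA + \<bar>x\<bar> * MB + MC"
            unfolding g_def using lin_bound MA MB MC e by blast
          moreover have "\<bar>t\<bar> * MA \<le> (b + 1) * MA" using xt MA0 by (simp add: mult_right_mono)
          moreover have "\<bar>x\<bar> * MB \<le> (a + 1) * MB" using xt MB0 by (simp add: mult_right_mono)
          ultimately show "\<bar>g x t \<eta>\<bar> \<le> E" unfolding E_def by linarith
        qed
      qed
    qed
    have monoH: "\<forall>y\<ge>Y. Hg A B C y x t \<ge> Hg A B C Y x t" if "(x, t) \<in> S" for x t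
    proof (intro allI impI)
      fix y assume "y \<ge> Y"
      have xt: "x \<ge> 0" "t \<ge> 0" "x + K * t \<le> Y" using inS[OF that] by auto
      show "Hg A B C y x t \<ge> Hg A B C Y x t" unfolding Hg_eq
      proof (rule mono_tail[OF gint Y0 \<open>y \<ge> Y\<close>])
        show "\<forall>\<eta>\<ge>Y. 0 \<le> g x t \<eta>" using pos xt unfolding g_def by force
      qed
    qed
    have diffH: "\<forall>y\<in>{0..Y}. \<bar>Hg A B C y x t - Hg A B C y x' t'\<bar> \<le> Y * (\<bar>t - t'\<bar> * MA + \<bar>x - x'\<bar> * MB)"
      for x t x' t'
    proof
      fix y assume y: "y \<in> {0..Y}"
      have eq: "Hg A B C y x t - Hg A B C y x' t' =
          set_lebesgue_integral lborel {0..y} (\<lambda>\<eta>. (t - t') * A \<eta> + (x - x') * B \<eta> + 0)"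
        unfolding Hg_eq set_integral_diff(2)[OF gint gint, symmetric]
        by (simp add: g_def algebra_simps)
      have int: "set_integrable lborel {0..y} (\<lambda>\<eta>. (t - t') * A \<eta> + (x - x') * B \<eta> + 0)"
        using set_integral_diff(1)[OF gint[of y x t] gint[of y x' t']]
        by (simp add: g_def algebra_simps)
      show "\<bar>Hg A B C y x t - Hg A B C y x' t'\<bar> \<le> Y * (\<bar>t - t'\<bar> * MA + \<bar>x - x'\<bar> * MB)"
        unfolding eq
      proof (rule abs_int_bound[OF int])
        show "0 \<le> y" "y \<le> Y" using y by auto
        show "\<forall>\<eta>\<in>{0..y}. \<bar>(t - t') * A \<eta> + (x - x') * B \<eta> + 0\<bar> \<le> \<bar>t - t'\<bar> * MA + \<bar>x - x'\<bar> * MB"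
        proof
          fix \<eta> assume "\<eta> \<in> {0..y}"
          then have e: "\<eta> \<in> {0..Y}" using y by auto
          show "\<bar>(t - t') * A \<eta> + (x - x') * B \<eta> + 0\<bar> \<le> \<bar>t - t'\<bar> * MA + \<bar>x - x'\<bar> * MB"
            using lin_bound[of A \<eta> MA B MB "\<lambda>_. 0" 0 "t - t'" "x - x'"] MA MB e by auto
        qed
      qed
    qed
    have "L-lipschitz_on S (\<lambda>(x, t). Inf ((\<lambda>y. Hg A B C y x t) ` {0..}))"
    proof (rule lipschitz_onI[OF _ L0])
      fix u v assume u: "u \<in> S" and v: "v \<in> S"
      obtain x t where xt: "u = (x, t)" by (cases u)
      obtain x' t' where xt': "v = (x', t')" by (cases v)
      have "\<bar>Inf ((\<lambda>y. Hg A B C y x t) ` {0..}) - Inf ((\<lambda>y. Hg A B C y x' t') ` {0..})\<bar>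
          \<le> Y * (\<bar>t - t'\<bar> * MA + \<bar>x - x'\<bar> * MB)"
        by (rule inf_lip[OF monoH monoH Y0 diffH Ebound Ebound]) (use u v xt xt' in auto)
      moreover have "\<bar>t - t'\<bar> \<le> dist u v" using dist_snd_le[of u v] xt xt' by (simp add: dist_real_def)
      moreover have "\<bar>x - x'\<bar> \<le> dist u v" using dist_fst_le[of u v] xt xt' by (simp add: dist_real_def)
      ultimately have "\<bar>Inf ((\<lambda>y. Hg A B C y x t) ` {0..}) - Inf ((\<lambda>y. Hg A B C y x' t') ` {0..})\<bar>
          \<le> Y * (dist u v * MA + dist u v * MB)"
        using Y0 MA0 MB0
        by (smt (verit, ccfv_SIG) mult_left_mono mult_right_mono)
      also have "\<dots> \<le> L * dist u v" unfolding L_def using Y0 MA0 MB0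
        by (simp add: algebra_simps mult_nonneg_nonneg)
      finally show "dist ((\<lambda>(x, t). Inf ((\<lambda>y. Hg A B C y x t) ` {0..})) u)
          ((\<lambda>(x, t). Inf ((\<lambda>y. Hg A B C y x t) ` {0..})) v) \<le> L * dist u v"
        using xt xt' by (simp add: dist_real_def)
    qed
    then show "\<exists>r>0. \<exists>L. L-lipschitz_on (ball p r \<inter> {0..} \<times> {0..}) (\<lambda>(x, t). Inf ((\<lambda>y. Hg A B C y x t) ` {0..}))"
      unfolding S_def by (intro exI[of _ 1]) auto
  qed
qed


lemma sbm_mult:
  fixes f g :: "real \<Rightarrow> real"
  assumes "set_borel_measurable lborel {0..} f" "set_borel_measurable lborel {0..} g"
  shows "set_borel_measurable lborel {0..} (\<lambda>\<eta>. f \<eta> * g \<eta>)"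
proof -
  have "(\<lambda>\<eta>. indicator {0::real..} \<eta> *\<^sub>R (f \<eta> * g \<eta>)) =
    (\<lambda>\<eta>. (indicator {0..} \<eta> *\<^sub>R f \<eta>) * (indicator {0..} \<eta> *\<^sub>R g \<eta>))"
    by (auto simp: fun_eq_iff indicator_def)
  then show ?thesis using assms unfolding set_borel_measurable_def by simp
qed

lemma sbm_uminus:
  fixes f :: "real \<Rightarrow> real"
  assumes "set_borel_measurable lborel {0..} f"
  shows "set_borel_measurable lborel {0..} (\<lambda>\<eta>. - f \<eta>)"
proof -
  have "(\<lambda>\<eta>. indicator {0::real..} \<eta> *\<^sub>R (- f \<eta>)) =
    (\<lambda>\<eta>. - (indicator {0..} \<eta> *\<^sub>R f \<eta>))"
    by (auto simp: fun_eq_iff indicator_def)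
  then show ?thesis using assms unfolding set_borel_measurable_def by simp
qed

lemma sbm_id: "set_borel_measurable lborel {0::real..} (\<lambda>\<eta>. \<eta>)"
  unfolding set_borel_measurable_def by simp

lemma lb_mult:
  fixes f g :: "real \<Rightarrow> real"
  assumes "\<forall>T. \<exists>M. \<forall>\<eta>\<in>{0..T}. \<bar>f \<eta>\<bar> \<le> M" "\<forall>T. \<exists>M. \<forall>\<eta>\<in>{0..T}. \<bar>g \<eta>\<bar> \<le> M"
  shows "\<forall>T. \<exists>M. \<forall>\<eta>\<in>{0..T}. \<bar>f \<eta> * g \<eta>\<bar> \<le> M"
proof
  fix T
  obtain M1 where M1: "\<forall>\<eta>\<in>{0..T}. \<bar>f \<eta>\<bar> \<le> M1" using assms(1) by blast
  obtain M2 where M2: "\<forall>\<eta>\<in>{0..T}. \<bar>g \<eta>\<bar> \<le> M2" using assms(2) by blast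
  have "\<forall>\<eta>\<in>{0..T}. \<bar>f \<eta> * g \<eta>\<bar> \<le> M1 * M2"
    using M1 M2 by (auto simp: abs_mult intro!: mult_mono)
  then show "\<exists>M. \<forall>\<eta>\<in>{0..T}. \<bar>f \<eta> * g \<eta>\<bar> \<le> M" by blast
qed

lemma lb_uminus:
  fixes f :: "real \<Rightarrow> real"
  assumes "\<forall>T. \<exists>M. \<forall>\<eta>\<in>{0..T}. \<bar>f \<eta>\<bar> \<le> M"
  shows "\<forall>T. \<exists>M. \<forall>\<eta>\<in>{0..T}. \<bar>- f \<eta>\<bar> \<le> M"
  using assms by simp

lemma lb_id: "\<forall>T. \<exists>M. \<forall>\<eta>\<in>{0::real..T}. \<bar>\<eta>\<bar> \<le> M"
proof
  fix T :: real
  show "\<exists>M. \<forall>\<eta>\<in>{0..T}. \<bar>\<eta>\<bar> \<le> M" by (intro exI[of _ T]) auto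
qed

lemma lb_of_global:
  fixes f :: "real \<Rightarrow> real"
  assumes "\<exists>M. \<forall>\<eta>\<ge>0. \<bar>f \<eta>\<bar> \<le> M"
  shows "\<forall>T. \<exists>M. \<forall>\<eta>\<in>{0..T}. \<bar>f \<eta>\<bar> \<le> M"
proof
  fix T :: real
  obtain M where "\<forall>\<eta>\<ge>0. \<bar>f \<eta>\<bar> \<le> M" using assms by blast
  then show "\<exists>M. \<forall>\<eta>\<in>{0..T}. \<bar>f \<eta>\<bar> \<le> M" by (intro exI[of _ M]) auto
qed

theorem lemma2p5:
  fixes u0 ub \<rho>0 \<rho>b :: "real \<Rightarrow> real"
  assumes u0_meas: "set_borel_measurable lborel {0..} u0"
    and u0_bdd: "\<exists>M. \<forall>\<eta>\<ge>0. \<bar>u0 \<eta>\<bar> \<le> M"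
    and ub_meas: "set_borel_measurable lborel {0..} ub"
    and ub_bdd: "\<exists>M. \<forall>\<eta>\<ge>0. \<bar>ub \<eta>\<bar> \<le> M"
    and ub_pos: "\<forall>\<eta>\<ge>0. ub \<eta> > 0"
    and \<rho>0_meas: "set_borel_measurable lborel {0..} \<rho>0"
    and \<rho>0_pos: "\<forall>\<eta>\<ge>0. \<rho>0 \<eta> > 0"
    and \<rho>0_lbdd: "\<forall>T. \<exists>M. \<forall>\<eta>\<in>{0..T}. \<bar>\<rho>0 \<eta>\<bar> \<le> M"
    and \<rho>b_meas: "set_borel_measurable lborel {0..} \<rho>b"
    and \<rho>b_pos: "\<forall>\<eta>\<ge>0. \<rho>b \<eta> > 0"
    and \<rho>b_lbdd: "\<forall>T. \<exists>M. \<forall>\<eta>\<in>{0..T}. \<bar>\<rho>b \<eta>\<bar> \<le> M"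
  shows "locally_lipschitz_on ({0..} \<times> {0..}) (\<lambda>(x, t). Fmin u0 \<rho>0 x t)
       \<and> locally_lipschitz_on ({0..} \<times> {0..}) (\<lambda>(x, t). Gmin ub \<rho>b x t)"
  proof
  obtain Mu where Mu: "\<forall>\<eta>\<ge>0. \<bar>u0 \<eta>\<bar> \<le> Mu" using u0_bdd by blast
  have Mu0: "Mu \<ge> 0" using Mu by force
  have eqF: "Fmin u0 \<rho>0 x t = Inf ((\<lambda>y. Hg (\<lambda>\<eta>. u0 \<eta> * \<rho>0 \<eta>) (\<lambda>\<eta>. - \<rho>0 \<eta>) (\<lambda>\<eta>. \<eta> * \<rho>0 \<eta>) y x t) ` {0..})"
    for x t
    unfolding Fmin_def Fyxt_def Hg_def by (simp add: algebra_simps)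
  have "locally_lipschitz_on ({0..} \<times> {0..})
     (\<lambda>(x, t). Inf ((\<lambda>y. Hg (\<lambda>\<eta>. u0 \<eta> * \<rho>0 \<eta>) (\<lambda>\<eta>. - \<rho>0 \<eta>) (\<lambda>\<eta>. \<eta> * \<rho>0 \<eta>) y x t) ` {0..}))"
  proof (rule gen_main[OF sbm_mult[OF u0_meas \<rho>0_meas] sbm_uminus[OF \<rho>0_meas] sbm_mult[OF sbm_id \<rho>0_meas]
        lb_mult[OF lb_of_global[OF u0_bdd] \<rho>0_lbdd] lb_uminus[OF \<rho>0_lbdd] lb_mult[OF lb_id \<rho>0_lbdd] Mu0])
    show "\<forall>x\<ge>0. \<forall>t\<ge>0. \<forall>\<eta>. x + Mu * t \<le> \<eta> \<longrightarrow> 0 \<le> t * (u0 \<eta> * \<rho>0 \<eta>) + x * - \<rho>0 \<eta> + \<eta> * \<rho>0 \<eta>"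
    proof (intro allI impI)
      fix x t \<eta> :: real assume h: "0 \<le> x" "0 \<le> t" "x + Mu * t \<le> \<eta>"
      have "Mu * t \<ge> 0" using Mu0 h by simp
      then have e: "\<eta> \<ge> 0" using h by linarith
      have "t * u0 \<eta> \<ge> - (t * Mu)"
        using Mu e h mult_left_mono[of "- u0 \<eta>" Mu t] by (auto simp: abs_le_iff)
      then have "t * u0 \<eta> + \<eta> - x \<ge> 0" using h by (simp add: algebra_simps)
      moreover have "\<rho>0 \<eta> > 0" using \<rho>0_pos e by blast
      ultimately have "0 \<le> (t * u0 \<eta> + \<eta> - x) * \<rho>0 \<eta>" by simp
      then show "0 \<le> t * (u0 \<eta> * \<rho>0 \<eta>) + x * - \<rho>0 \<eta> + \<eta> * \<rho>0 \<eta>"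
        by (simp add: algebra_simps)
    qed
  qed
  then show "locally_lipschitz_on ({0..} \<times> {0..}) (\<lambda>(x, t). Fmin u0 \<rho>0 x t)"
    by (simp add: eqF)
next
  have eqG: "Gmin ub \<rho>b x t = Inf ((\<lambda>y. Hg (\<lambda>\<eta>. - (ub \<eta> * (ub \<eta> * \<rho>b \<eta>))) (\<lambda>\<eta>. \<rho>b \<eta> * ub \<eta>) (\<lambda>\<eta>. \<eta> * (ub \<eta> * (ub \<eta> * \<rho>b \<eta>))) y x t) ` {0..})"
    for x t
    unfolding Gmin_def Gtxt_def Hg_def by (simp add: algebra_simps)
  have one: "(1::real) \<ge> 0" by simp
  have "locally_lipschitz_on ({0..} \<times> {0..})
     (\<lambda>(x, t). Inf ((\<lambda>y. Hg (\<lambda>\<eta>. - (ub \<eta> * (ub \<eta> * \<rho>b \<eta>))) (\<lambda>\<eta>. \<rho>b \<eta> * ub \<eta>) (\<lambda>\<eta>. \<eta> * (ub \<eta> * (ub \<eta> * \<rho>b \<eta>))) y x t) ` {0..}))"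
  proof (rule gen_main[OF sbm_uminus[OF sbm_mult[OF ub_meas sbm_mult[OF ub_meas \<rho>b_meas]]]
        sbm_mult[OF \<rho>b_meas ub_meas] sbm_mult[OF sbm_id sbm_mult[OF ub_meas sbm_mult[OF ub_meas \<rho>b_meas]]]
        lb_uminus[OF lb_mult[OF lb_of_global[OF ub_bdd] lb_mult[OF lb_of_global[OF ub_bdd] \<rho>b_lbdd]]]
        lb_mult[OF \<rho>b_lbdd lb_of_global[OF ub_bdd]]
        lb_mult[OF lb_id lb_mult[OF lb_of_global[OF ub_bdd] lb_mult[OF lb_of_global[OF ub_bdd] \<rho>b_lbdd]]] one])
    show "\<forall>x\<ge>0. \<forall>t\<ge>0. \<forall>\<eta>. x + 1 * t \<le> \<eta> \<longrightarrow>
      0 \<le> t * - (ub \<eta> * (ub \<eta> * \<rho>b \<eta>)) + x * (\<rho>b \<eta> * ub \<eta>) + \<eta> * (ub \<eta> * (ub \<eta> * \<rho>b \<eta>))"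
    proof (intro allI impI)
      fix x t \<eta> :: real assume h: "0 \<le> x" "0 \<le> t" "x + 1 * t \<le> \<eta>"
      then have e: "\<eta> \<ge> 0" by linarith
      have u: "ub \<eta> > 0" using ub_pos e by blast
      have r: "\<rho>b \<eta> > 0" using \<rho>b_pos e by blast
      have "ub \<eta> * (\<eta> - t) \<ge> 0" using u h by simp
      then have "x + ub \<eta> * (\<eta> - t) \<ge> 0" using h by linarith
      then have "0 \<le> (x + ub \<eta> * (\<eta> - t)) * (\<rho>b \<eta> * ub \<eta>)" using u r by simp
      then show "0 \<le> t * - (ub \<eta> * (ub \<eta> * \<rho>b \<eta>)) + x * (\<rho>b \<eta> * ub \<eta>) + \<eta> * (ub \<eta> * (ub \<eta> * \<rho>b \<eta>))"
        by (simp add: algebra_simps)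
    qed
  qed
  then show "locally_lipschitz_on ({0..} \<times> {0..}) (\<lambda>(x, t). Gmin ub \<rho>b x t)"
    by (simp add: eqG)
qed

end
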